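(* Let $K$ be a strength measure. Then for every bipartite Hamiltonian $H$, $K(H)\ge0$, with $K(H)=0$ if and only if $H$ is local.
   Context: All Hamiltonians are Hermitian operators on finite-dimensional Hilbert spaces. A bipartite Hamiltonian acts on $\mathcal H_A\otimes\mathcal H_B$, with system $A$ held by Alice and $B$ by Bob; it is local if it has the form $H_A\otimes I_B+I_A\otimes H_B$ and nonlocal otherwise. Simulation model: Alice and Bob may attach local ancillas, apply arbitrary instantaneous local unitaries, and switch $H$ on for chosen times, to track (stroboscopically, for arbitrarily fine times) the evolution $e^{-iH't}$; the simulation rate $\gamma_{H'|H}$ is the supremum of $\gamma\ge0$ such that evolution under $H'$ for time $t$ is achievable using $H$ for total time $t/\gamma$. Local Hamiltonians can be produced at no cost (so $\gamma_{H_0|H}=\infty$ for local $H_0$), a local Hamiltonian cannot simulate a nonlocal one ($\gamma_{H|H_0}=0$), and (known fact) every nonlocal bipartite Hamiltonian can simulate every bounded bipartite Hamiltonian at a strictly positive rate. A strength measure is a function $K$ from bipartite Hamiltonians (on arbitrary finite dimensions) to $\mathbb R\cup\{\pm\infty\}$ that is finite on every Hamiltonian, not identically zero, and satisfies the monotonicity axiom $K(H)\ge\gamma_{H'|H}K(H')$ for all $H,H'$. *)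

theory Defs
  imports "Jordan_Normal_Form.Matrix" "HOL-Library.Extended_Real"
begin

definition herm :: "nat \<Rightarrow> complex mat \<Rightarrow> bool" where
  "herm n A \<longleftrightarrow> A \<in> carrier_mat n n \<and>
     (\<forall>i<n. \<forall>j<n. A $$ (i, j) = cnj (A $$ (j, i)))"

text \<open>Kronecker (tensor) product; basis vector |a> (x) |b> has index a * dim_B + b.\<close>
definition kron :: "complex mat \<Rightarrow> complex mat \<Rightarrow> complex mat" where
  "kron A B = mat (dim_row A * dim_row B) (dim_col A * dim_col B)
     (\<lambda>(i, j). A $$ (i div dim_row B, j div dim_col B) * B $$ (i mod dim_row B, j mod dim_col B))"

text \<open>A bipartite Hamiltonian is a triple (dA, dB, H): H Hermitian on C^dA (x) C^dB.\<close>
type_synonym bham = "nat \<times> nat \<times> complex mat"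

definition bipartite_ham :: "bham \<Rightarrow> bool" where
  "bipartite_ham X = (case X of (dA, dB, H) \<Rightarrow> dA \<ge> 1 \<and> dB \<ge> 1 \<and> herm (dA * dB) H)"

definition local_ham :: "bham \<Rightarrow> bool" where
  "local_ham X = (case X of (dA, dB, H) \<Rightarrow>
     bipartite_ham X \<and> (\<exists>HA HB. herm dA HA \<and> herm dB HB \<and>
        H = kron HA (1\<^sub>m dB) + kron (1\<^sub>m dA) HB))"

definition nonlocal_ham :: "bham \<Rightarrow> bool" where
  "nonlocal_ham X \<longleftrightarrow> bipartite_ham X \<and> \<not> local_ham X"

text \<open>Strength measure relative to a simulation-rate function gamma, where
  gamma H' H is the rate gamma_{H'|H} of simulating H' using H.\<close>
definition strength_measure :: "(bham \<Rightarrow> bham \<Rightarrow> ereal) \<Rightarrow> (bham \<Rightarrow> ereal) \<Rightarrow> bool" where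
  "strength_measure gamma K \<longleftrightarrow>
     (\<forall>H. bipartite_ham H \<longrightarrow> \<bar>K H\<bar> \<noteq> \<infinity>) \<and>
     (\<exists>H. bipartite_ham H \<and> K H \<noteq> 0) \<and>
     (\<forall>H H'. bipartite_ham H \<longrightarrow> bipartite_ham H' \<longrightarrow> K H \<ge> gamma H' H * K H')"

end

theory Submission
  imports Defs
begin

definition Lx :: bham where "Lx = (1, 1, 0\<^sub>m 1 1)"
definition Nx :: bham where "Nx = (2, 2, mat 4 4 (\<lambda>(i,j). if i = j then (if i = 0 \<or> i = 3 then 1 else -1) else 0))"

lemma Lx_local: "local_ham Lx"
proof -
  have "0\<^sub>m 1 1 = kron (0\<^sub>m 1 1) (1\<^sub>m 1) + kron (1\<^sub>m 1) (0\<^sub>m 1 1)"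
    by (rule eq_matI) (auto simp: kron_def)
  moreover have "herm 1 (0\<^sub>m 1 1)" by (auto simp: herm_def)
  ultimately show ?thesis unfolding local_ham_def Lx_def bipartite_ham_def by auto
qed

lemma Nx_nonlocal: "nonlocal_ham Nx"
proof -
  let ?M = "mat 4 4 (\<lambda>(i,j). if i = j then (if i = 0 \<or> i = 3 then 1 else -1) else (0::complex))"
  have hb: "herm 4 ?M" unfolding herm_def by auto
  have nl: False if HA: "herm 2 HA" and HB: "herm 2 HB" and eq: "?M = kron HA (1\<^sub>m 2) + kron (1\<^sub>m 2) HB" for HA HB
  proof -
    have c: "HA \<in> carrier_mat 2 2" "HB \<in> carrier_mat 2 2" using HA HB by (auto simp: herm_def)
    have e: "?M $$ (k,k) = HA $$ (k div 2, k div 2) + HB $$ (k mod 2, k mod 2)" if "k < 4" for k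
    proof -
      have "?M $$ (k,k) = (kron HA (1\<^sub>m 2) + kron (1\<^sub>m 2) HB) $$ (k,k)" using eq by simp
      also have "\<dots> = kron HA (1\<^sub>m 2) $$ (k,k) + kron (1\<^sub>m 2) HB $$ (k,k)"
        using that c by (simp add: kron_def)
      also have "\<dots> = HA $$ (k div 2, k div 2) + HB $$ (k mod 2, k mod 2)"
        using that c by (simp add: kron_def)
      finally show ?thesis .
    qed
    have e0: "HA $$ (0,0) + HB $$ (0,0) = 1" using e[of 0] by simp
    have e1: "HA $$ (0,0) + HB $$ (1,1) = -1" using e[of 1] by simp
    have e2: "HA $$ (1,1) + HB $$ (0,0) = -1" using e[of 2] by simp
    have e3: "HA $$ (1,1) + HB $$ (1,1) = 1" using e[of 3] by simp
    have "(HA $$ (0,0) + HB $$ (0,0)) + (HA $$ (1,1) + HB $$ (1,1)) = (HA $$ (0,0) + HB $$ (1,1)) + (HA $$ (1,1) + HB $$ (0,0))"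
      by (simp add: algebra_simps)
    hence "(1::complex) + 1 = (-1) + (-1)" by (simp only: e0 e1 e2 e3)
    thus False by simp
  qed
  have b: "bipartite_ham Nx" unfolding bipartite_ham_def Nx_def using hb by simp
  have "\<not> local_ham Nx"
  proof
    assume "local_ham Nx"
    then obtain HA HB where "herm 2 HA" "herm 2 HB" "?M = kron HA (1\<^sub>m 2) + kron (1\<^sub>m 2) HB"
      unfolding local_ham_def Nx_def prod.case by auto
    thus False using nl by blast
  qed
  with b show ?thesis unfolding nonlocal_ham_def by (rule conjI)
qed

theorem mainTheorem11:
  fixes gamma :: "bham \<Rightarrow> bham \<Rightarrow> ereal" and K :: "bham \<Rightarrow> ereal"
  assumes gamma_nonneg: "\<And>H H'. bipartite_ham H \<Longrightarrow> bipartite_ham H' \<Longrightarrow> gamma H' H \<ge> 0"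
    and local_free: "\<And>H0 H. local_ham H0 \<Longrightarrow> bipartite_ham H \<Longrightarrow> gamma H0 H = \<infinity>"
    and local_cannot: "\<And>H0 H. local_ham H0 \<Longrightarrow> nonlocal_ham H \<Longrightarrow> gamma H H0 = 0"
    and nonlocal_universal: "\<And>H H'. nonlocal_ham H \<Longrightarrow> bipartite_ham H' \<Longrightarrow> gamma H' H > 0"
    and K: "strength_measure gamma K"
  shows "\<forall>H. bipartite_ham H \<longrightarrow> K H \<ge> 0 \<and> (K H = 0 \<longleftrightarrow> local_ham H)"
proof -
  note KK = K[unfolded strength_measure_def]
  have fin: "\<And>H. bipartite_ham H \<Longrightarrow> \<bar>K H\<bar> \<noteq> \<infinity>"
    by (rule KK[THEN conjunct1, rule_format])
  have ex: "\<exists>H. bipartite_ham H \<and> K H \<noteq> 0"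
    using KK[THEN conjunct2, THEN conjunct1] .
  have mono: "\<And>H H'. bipartite_ham H \<Longrightarrow> bipartite_ham H' \<Longrightarrow> K H \<ge> gamma H' H * K H'"
    by (rule KK[THEN conjunct2, THEN conjunct2, rule_format])
  have lb: "bipartite_ham H" if "local_ham H" for H using that by (auto simp: local_ham_def split: prod.splits)
  have nb: "bipartite_ham H" if "nonlocal_ham H" for H using that by (auto simp: nonlocal_ham_def)
  have Nb: "bipartite_ham Nx" using Nx_nonlocal nb by blast
  have loc0: "K H0 = 0" if "local_ham H0" for H0
  proof -
    have "K H0 \<ge> gamma Nx H0 * K Nx" using mono[OF lb[OF that] Nb] .
    hence ge: "K H0 \<ge> 0" by (simp only: local_cannot[OF that Nx_nonlocal] ereal_zero_mult)
    have "K Nx \<ge> gamma H0 Nx * K H0" using mono[OF Nb lb[OF that]] .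
    hence "K Nx \<ge> \<infinity> * K H0" by (simp only: local_free[OF that Nb])
    moreover have "\<bar>K Nx\<bar> \<noteq> \<infinity>" by (rule fin[OF Nb])
    ultimately have "\<not> K H0 > 0"
    proof (intro notI)
      assume a: "\<infinity> * K H0 \<le> K Nx" "\<bar>K Nx\<bar> \<noteq> \<infinity>" "K H0 > 0"
      hence "\<infinity> * K H0 = \<infinity>" by simp
      with a show False by simp
    qed
    with ge show ?thesis by simp
  qed
  have nn: "K H \<ge> 0" if "bipartite_ham H" for H
  proof -
    have "K H \<ge> gamma Lx H * K Lx" using mono[OF that lb[OF Lx_local]] .
    thus ?thesis using loc0[OF Lx_local] by simp
  qed
  have nz: "K H \<noteq> 0" if "nonlocal_ham H" for H
  proof
    assume z: "K H = 0"
    obtain H' where H': "bipartite_ham H'" "K H' \<noteq> 0" using ex by blast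
    have "\<not> local_ham H'" using H' loc0 by blast
    hence nl: "nonlocal_ham H'" using H' by (simp add: nonlocal_ham_def)
    have g: "gamma H' H > 0" using nonlocal_universal[OF that H'(1)] .
    have "K H \<ge> gamma H' H * K H'" using mono[OF nb[OF that] H'(1)] .
    moreover have "K H' > 0" using nn[OF H'(1)] H'(2) by simp
    ultimately have "0 \<ge> gamma H' H * K H'" using z by simp
    moreover have "gamma H' H * K H' > 0" using g \<open>K H' > 0\<close> by (simp add: ereal_zero_less_0_iff)
    ultimately show False by simp
  qed
  show ?thesis
  proof (intro allI impI conjI)
    fix H assume h: "bipartite_ham H"
    show "K H \<ge> 0" using nn[OF h] .
    show "K H = 0 \<longleftrightarrow> local_ham H"
    proof
      assume "K H = 0"
      show "local_ham H"
      proof (rule ccontr)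
        assume "\<not> local_ham H"
        hence "nonlocal_ham H" using h unfolding nonlocal_ham_def by (rule conjI[rotated])
        thus False using nz \<open>K H = 0\<close> by blast
      qed
    next
      assume "local_ham H"
      thus "K H = 0" by (rule loc0)
    qed
  qed
qed

end
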